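(* Let $\tau\ge 1$ be an integer and $0<\kappa\le 1$. Let $\mathcal{B}=(B_1,\ldots,B_K)$ be a blockade in a graph, of width $W$. Then there is an equicardinal $(\kappa,\tau)$-support-invariant contraction $\mathcal{B}'=(B_1',\ldots,B_K')$ of $\mathcal{B}$ with width at least $\kappa^{2^K\tau^\tau}W$.
   Context: A blockade in a graph $G$ is a sequence $\mathcal{B}=(B_i:i\in I)$ of pairwise disjoint nonempty subsets of $V(G)$ (blocks), $I$ a finite set of integers; its length is $|I|$, its width is $\min_i|B_i|$; it is equicardinal if all blocks have the same cardinality. A contraction of $\mathcal{B}$ is a blockade $(B_i':i\in I)$ with $\emptyset\ne B_i'\subseteq B_i$ for all $i$. An induced subgraph $H$ of $G$ is $\mathcal{B}$-rainbow if each vertex of $H$ lies in some block and no two lie in the same block; its support is the set of $i\in I$ with $V(H)\cap B_i\neq\emptyset$. The $\mathcal{B}$-ordering of a $\mathcal{B}$-rainbow $H$ is the linear order on $V(H)$ with $u<v$ if $u\in B_i$, $v\in B_j$, $i<j$. An ordered graph is a graph with a linear order of its vertex set; a $\mathcal{B}$-rainbow $H$ is a copy of an ordered graph $J$ if $H$ with its $\mathcal{B}$-ordering is isomorphic to $J$ as ordered graphs. The trace of an ordered graph $J$ relative to $\mathcal{B}$ is the set of supports of all $\mathcal{B}$-rainbow copies of $J$. For $0<\kappa\le1$ and integer $\tau\ge1$, $\mathcal{B}$ is $(\kappa,\tau)$-support-invariant if for every contraction $\mathcal{B}'$ of $\mathcal{B}$ of width at least $\kappa$ times the width of $\mathcal{B}$,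 and every ordered tree $J$ with $|J|\le\tau$, the trace of $J$ relative to $\mathcal{B}$ equals the trace of $J$ relative to $\mathcal{B}'$. *)

theory Defs
  imports Complex_Main
begin

definition graph :: "'v set \<Rightarrow> ('v \<Rightarrow> 'v \<Rightarrow> bool) \<Rightarrow> bool" where
  "graph V E \<longleftrightarrow> finite V \<and> (\<forall>x y. E x y \<longrightarrow> E y x) \<and> (\<forall>x. \<not> E x x)
      \<and> (\<forall>x y. E x y \<longrightarrow> x \<in> V \<and> y \<in> V)"

definition blockade :: "'v set \<Rightarrow> int set \<Rightarrow> (int \<Rightarrow> 'v set) \<Rightarrow> bool" where
  "blockade V I B \<longleftrightarrow> finite I \<and> (\<forall>i\<in>I. B i \<noteq> {} \<and> B i \<subseteq> V)
      \<and> (\<forall>i\<in>I. \<forall>j\<in>I. i \<noteq> j \<longrightarrow> B i \<inter> B j = {})"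

definition width :: "int set \<Rightarrow> (int \<Rightarrow> 'v set) \<Rightarrow> nat" where
  "width I B = Min ((\<lambda>i. card (B i)) ` I)"

definition equicardinal :: "int set \<Rightarrow> (int \<Rightarrow> 'v set) \<Rightarrow> bool" where
  "equicardinal I B \<longleftrightarrow> (\<forall>i\<in>I. \<forall>j\<in>I. card (B i) = card (B j))"

definition contraction :: "'v set \<Rightarrow> int set \<Rightarrow> (int \<Rightarrow> 'v set) \<Rightarrow> (int \<Rightarrow> 'v set) \<Rightarrow> bool" where
  "contraction V I B B' \<longleftrightarrow> blockade V I B' \<and> (\<forall>i\<in>I. B' i \<noteq> {} \<and> B' i \<subseteq> B i)"

text \<open>Ordered graphs: vertex set {0..<n} with the natural order, adjacency JE.\<close>
definition ordered_graph :: "nat \<Rightarrow> (nat \<Rightarrow> nat \<Rightarrow> bool) \<Rightarrow> bool" where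
  "ordered_graph n JE \<longleftrightarrow> (\<forall>a b. JE a b \<longrightarrow> JE b a) \<and> (\<forall>a. \<not> JE a a)
      \<and> (\<forall>a b. JE a b \<longrightarrow> a < n \<and> b < n)"

definition og_connected :: "nat \<Rightarrow> (nat \<Rightarrow> nat \<Rightarrow> bool) \<Rightarrow> bool" where
  "og_connected n JE \<longleftrightarrow> (\<forall>a<n. \<forall>b<n. JE\<^sup>*\<^sup>* a b)"

definition is_cycle :: "(nat \<Rightarrow> nat \<Rightarrow> bool) \<Rightarrow> nat list \<Rightarrow> bool" where
  "is_cycle JE cs \<longleftrightarrow> length cs \<ge> 3 \<and> distinct cs
      \<and> (\<forall>k. Suc k < length cs \<longrightarrow> JE (cs ! k) (cs ! Suc k))
      \<and> JE (last cs) (hd cs)"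

definition ordered_tree :: "nat \<Rightarrow> (nat \<Rightarrow> nat \<Rightarrow> bool) \<Rightarrow> bool" where
  "ordered_tree n JE \<longleftrightarrow> ordered_graph n JE \<and> n \<ge> 1 \<and> og_connected n JE
      \<and> (\<nexists>cs. is_cycle JE cs)"

text \<open>A B-rainbow copy of the ordered graph (n, JE): the vertex a of J is mapped to
  f a, lying in block phi a; phi is strictly increasing (so distinct vertices lie in
  distinct blocks, and the B-ordering agrees with the order of J), and adjacency in
  the induced subgraph on the image matches J.\<close>
definition rainbow_copy ::
  "('v \<Rightarrow> 'v \<Rightarrow> bool) \<Rightarrow> int set \<Rightarrow> (int \<Rightarrow> 'v set) \<Rightarrow> nat \<Rightarrow> (nat \<Rightarrow> nat \<Rightarrow> bool)
     \<Rightarrow> (nat \<Rightarrow> int) \<Rightarrow> (nat \<Rightarrow> 'v) \<Rightarrow> bool" where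
  "rainbow_copy E I B n JE phi f \<longleftrightarrow>
     (\<forall>a<n. phi a \<in> I \<and> f a \<in> B (phi a))
     \<and> (\<forall>a<n. \<forall>b<n. a < b \<longrightarrow> phi a < phi b)
     \<and> (\<forall>a<n. \<forall>b<n. E (f a) (f b) \<longleftrightarrow> JE a b)"

definition trace ::
  "('v \<Rightarrow> 'v \<Rightarrow> bool) \<Rightarrow> int set \<Rightarrow> (int \<Rightarrow> 'v set) \<Rightarrow> nat \<Rightarrow> (nat \<Rightarrow> nat \<Rightarrow> bool) \<Rightarrow> int set set" where
  "trace E I B n JE = {phi ` {0..<n} | phi f. rainbow_copy E I B n JE phi f}"

definition support_invariant ::
  "'v set \<Rightarrow> ('v \<Rightarrow> 'v \<Rightarrow> bool) \<Rightarrow> real \<Rightarrow> nat \<Rightarrow> int set \<Rightarrow> (int \<Rightarrow> 'v set) \<Rightarrow> bool" where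
  "support_invariant V E \<kappa> \<tau> I B \<longleftrightarrow>
     (\<forall>B'. contraction V I B B' \<and> real (width I B') \<ge> \<kappa> * real (width I B) \<longrightarrow>
        (\<forall>n JE. ordered_tree n JE \<and> n \<le> \<tau> \<longrightarrow> trace E I B n JE = trace E I B' n JE))"

end

theory Submission imports Defs "HOL-Library.FuncSet" begin


locale otree =
  fixes n :: nat and JE :: "nat \<Rightarrow> nat \<Rightarrow> bool"
  assumes tree: "ordered_tree n JE"
begin

lemma sym: "JE a b \<Longrightarrow> JE b a" and irr: "\<not> JE a a" and bnd: "JE a b \<Longrightarrow> a < n \<and> b < n"
  and n1: "n \<ge> 1" and conn: "a < n \<Longrightarrow> b < n \<Longrightarrow> JE\<^sup>*\<^sup>* a b" and acyc: "\<not> is_cycle JE cs"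
  using tree unfolding ordered_tree_def ordered_graph_def og_connected_def by auto

definition d :: "nat \<Rightarrow> nat" where "d v = (LEAST k. (JE ^^ k) 0 v)"

lemma reach: "v < n \<Longrightarrow> \<exists>k. (JE ^^ k) 0 v"
  using conn[of 0 v] n1 by (simp add: rtranclp_power)

lemma d_path: "v < n \<Longrightarrow> (JE ^^ d v) 0 v"
  unfolding d_def by (rule LeastI_ex) (rule reach)

lemma d_le: "(JE ^^ k) 0 v \<Longrightarrow> d v \<le> k"
  unfolding d_def by (rule Least_le)

lemma d0: "d 0 = 0"
  using d_le[of 0 0] by simp

lemma d_zero_iff: "v < n \<Longrightarrow> d v = 0 \<Longrightarrow> v = 0"
  using d_path[of v] by simp

lemma d_edge: "JE u v \<Longrightarrow> d v \<le> d u + 1"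
  using d_path[of u] bnd[of u v] by (metis Suc_eq_plus1 d_le relpowp_Suc_I)

lemma d_parent_ex: assumes "v < n" "v \<noteq> 0" shows "\<exists>u. JE u v \<and> d u + 1 = d v"
proof -
  have "d v \<noteq> 0" using assms d_zero_iff by blast
  then obtain k where k: "d v = Suc k" by (cases "d v") auto
  with d_path[OF assms(1)] have "(JE ^^ Suc k) 0 v" by simp
  then obtain u where u: "(JE ^^ k) 0 u" "JE u v" by (rule relpowp_Suc_E)
  have "d u \<le> k" using u(1) by (rule d_le)
  moreover have "d v \<le> d u + 1" using u(2) by (rule d_edge)
  ultimately show ?thesis using u k by auto
qed

definition par where "par v = (SOME u. JE u v \<and> d u + 1 = d v)"

lemma par: "v < n \<Longrightarrow> v \<noteq> 0 \<Longrightarrow> JE (par v) v \<and> d (par v) + 1 = d v"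
  unfolding par_def by (rule someI_ex) (rule d_parent_ex)

definition P where "P x i = (par ^^ i) x"

lemma P_props: "x < n \<Longrightarrow> i \<le> d x \<Longrightarrow> P x i < n \<and> d (P x i) = d x - i"
proof (induction i)
  case 0 then show ?case by (simp add: P_def)
next
  case (Suc i)
  then have h: "P x i < n" "d (P x i) = d x - i" by auto
  have "d (P x i) > 0" using h Suc.prems by simp
  then have "P x i \<noteq> 0" using d0 by (metis less_irrefl)
  from par[OF h(1) this] have "JE (P x (Suc i)) (P x i)" "d (P x (Suc i)) + 1 = d (P x i)"
    by (auto simp: P_def)
  then show ?case using bnd h Suc.prems by auto
qed

lemma P_edge: "x < n \<Longrightarrow> i < d x \<Longrightarrow> JE (P x (Suc i)) (P x i)"
proof -
  assume a: "x < n" "i < d x"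
  then have h: "P x i < n" "d (P x i) = d x - i" using P_props by auto
  have "d (P x i) > 0" using h a by simp
  then have "P x i \<noteq> 0" using d0 by (metis less_irrefl)
  from par[OF h(1) this] show ?thesis by (auto simp: P_def)
qed

lemma P_end: "x < n \<Longrightarrow> P x (d x) = 0"
  using P_props[of x "d x"] d_zero_iff by auto

lemma P0: "P x 0 = x" by (simp add: P_def)

lemma one_side:
  assumes e: "JE a b" and le: "d a \<le> d b"
  shows "b \<noteq> 0 \<and> par b = a"
proof (rule ccontr)
  assume nc: "\<not> (b \<noteq> 0 \<and> par b = a)"
  have an: "a < n" and bn: "b < n" using bnd e by auto
  have b0: "b \<noteq> 0"
  proof
    assume "b = 0"
    then have "d a = 0" using le d0 by simp
    then have "a = 0" using an d_zero_iff by blast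
    then show False using e \<open>b = 0\<close> irr by simp
  qed
  define c where "c = par b"
  have ca: "c \<noteq> a" using nc b0 c_def by simp
  have pc: "JE c b" "d c + 1 = d b" using par[OF bn b0] c_def by auto
  have cn: "c < n" using pc bnd by auto
  have dba: "d b \<le> d a + 1" using d_edge[OF e] .
  have dca: "d c \<le> d a" using pc dba by simp
  define A where "A = {P c j | j. j \<le> d c}"
  define i0 where "i0 = (LEAST i. P a i \<in> A)"
  have exA: "P a (d a) \<in> A" using P_end[OF an] P_end[OF cn] A_def by auto
  have i0A: "P a i0 \<in> A" unfolding i0_def by (rule LeastI) (rule exA)
  have i0le: "i0 \<le> d a" unfolding i0_def by (rule Least_le) (rule exA)
  have notA: "i < i0 \<Longrightarrow> P a i \<notin> A" for i unfolding i0_def by (rule not_less_Least)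
  have i0pos: "i0 \<noteq> 0"
  proof
    assume "i0 = 0"
    then have "a \<in> A" using i0A P0 by simp
    then obtain j where j: "j \<le> d c" "a = P c j" using A_def by auto
    then have "d a = d c - j" using P_props[OF cn j(1)] by simp
    then have "j = 0" using dca j(1) by simp
    then show False using j ca P0 by simp
  qed
  obtain j0 where j0: "j0 \<le> d c" "P a i0 = P c j0" using i0A A_def by auto
  define Cs where "Cs = map (P c) [0..<Suc j0]"
  define As where "As = map (P a) [0..<i0]"
  define cs where "cs = b # Cs @ rev As"
  have As_ne: "As \<noteq> []" using i0pos As_def by simp
  have Cs_ne: "Cs \<noteq> []" using Cs_def by simp
  have hdCs: "hd Cs = c" using Cs_def P0 by (simp add: upt_conv_Cons del: upt_Suc)
  have lastCs: "last Cs = P a i0" using Cs_def j0 by (simp add: last_map)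
  have hdAs: "hd As = a" using As_def i0pos P0 by (simp add: hd_map)
  have lastAs: "last As = P a (i0 - 1)" using As_def i0pos by (simp add: last_map)
  have sCs: "successively JE Cs"
    unfolding Cs_def successively_conv_nth
  proof (intro allI impI)
    fix i assume "Suc i < length (map (P c) [0..<Suc j0])"
    then have "i < d c" using j0 by simp
    then show "JE (map (P c) [0..<Suc j0] ! i) (map (P c) [0..<Suc j0] ! Suc i)"
      using P_edge[OF cn] sym \<open>Suc i < _\<close> by (simp del: upt_Suc)
  qed
  have sAs: "successively (\<lambda>x y. JE y x) As"
    unfolding As_def successively_conv_nth
  proof (intro allI impI)
    fix i assume "Suc i < length (map (P a) [0..<i0])"
    then have "i < d a" using i0le by simp
    then show "JE (map (P a) [0..<i0] ! Suc i) (map (P a) [0..<i0] ! i)"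
      using P_edge[OF an] \<open>Suc i < _\<close> by simp
  qed
  have link: "JE (P a i0) (P a (i0 - 1))"
    using P_edge[OF an, of "i0 - 1"] i0pos i0le by simp
  have succ: "successively JE cs"
    unfolding cs_def using sCs sAs As_ne hdCs lastCs lastAs link pc sym
    by (auto simp: successively_Cons successively_append_iff hd_rev Cs_ne)
  have dCs: "x \<in> set Cs \<Longrightarrow> d x < d b" for x
    using Cs_def P_props[OF cn] pc j0 by auto
  have dAs: "x \<in> set As \<Longrightarrow> x = a \<or> d x < d a" for x
  proof -
    assume "x \<in> set As"
    then obtain i where i: "i < i0" "x = P a i" using As_def by auto
    show ?thesis
    proof (cases "i = 0")
      case True then show ?thesis using i P0 by simp
    next
      case False then show ?thesis using i P_props[OF an, of i] i0le by auto
    qed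
  qed
  have injC: "inj_on (P c) {0..<Suc j0}"
  proof (rule inj_onI)
    fix x y assume "x \<in> {0..<Suc j0}" "y \<in> {0..<Suc j0}" "P c x = P c y"
    then show "x = y" using P_props[OF cn, of x] P_props[OF cn, of y] j0 by auto
  qed
  have injA: "inj_on (P a) {0..<i0}"
  proof (rule inj_onI)
    fix x y assume "x \<in> {0..<i0}" "y \<in> {0..<i0}" "P a x = P a y"
    then show "x = y" using P_props[OF an, of x] P_props[OF an, of y] i0le by auto
  qed
  have disj: "set Cs \<inter> set As = {}"
  proof -
    have "set Cs \<subseteq> A" using Cs_def A_def j0 by auto
    moreover have "set As \<inter> A = {}" using As_def notA by auto
    ultimately show ?thesis by auto
  qed
  have bnA: "b \<notin> set As" using dAs e irr le by fastforce
  have bnC: "b \<notin> set Cs" using dCs by blast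
  have dist: "distinct cs"
    unfolding cs_def using injC injA disj bnA bnC
    by (auto simp: Cs_def As_def distinct_map simp del: upt_Suc)
  have "length As \<ge> 1" using As_ne by (cases As) auto
  then have len: "length cs \<ge> 3" using cs_def by (auto simp: Cs_def)
  have "is_cycle JE cs"
    unfolding is_cycle_def using len dist succ successively_nth[OF succ]
    using As_ne e by (auto simp: cs_def last_rev hdAs)
  then show False using acyc by blast
qed

lemma edge_char: "a < n \<Longrightarrow> b < n \<Longrightarrow> JE a b \<longleftrightarrow> (b \<noteq> 0 \<and> par b = a) \<or> (a \<noteq> 0 \<and> par a = b)"
proof
  assume "JE a b"
  then show "(b \<noteq> 0 \<and> par b = a) \<or> (a \<noteq> 0 \<and> par a = b)"
    using one_side[of a b] one_side[of b a] sym by (cases "d a \<le> d b") auto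
next
  assume "a < n" "b < n" "(b \<noteq> 0 \<and> par b = a) \<or> (a \<noteq> 0 \<and> par a = b)"
  then show "JE a b" using par sym by auto
qed

definition enc :: "nat \<Rightarrow> nat" where
  "enc v = (if v = 0 then n - 1 else if v < n then par v else 0)"

lemma enc_range: "n \<le> \<tau> \<Longrightarrow> v < \<tau> \<Longrightarrow> enc v < \<tau>"
proof -
  assume a: "n \<le> \<tau>" "v < \<tau>"
  have "0 < v \<Longrightarrow> v < n \<Longrightarrow> par v < n" using par bnd by blast
  then show ?thesis unfolding enc_def using a n1 by auto
qed

end

lemma enc_inj:
  assumes t1: "ordered_tree n JE" and t2: "ordered_tree n' JE'" and "n \<le> \<tau>" "n' \<le> \<tau>"
    and eq: "restrict (otree.enc n JE) {0..<\<tau>} = restrict (otree.enc n' JE') {0..<\<tau>}"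
  shows "n = n' \<and> JE = JE'"
proof -
  interpret A: otree n JE by (rule otree.intro) (rule t1)
  interpret B: otree n' JE' by (rule otree.intro) (rule t2)
  have tpos: "0 < \<tau>" using A.n1 assms by simp
  have ee: "v < \<tau> \<Longrightarrow> A.enc v = B.enc v" for v using eq by (metis restrict_apply' atLeastLessThan_iff zero_le)
  have "n - 1 = n' - 1" using ee[OF tpos] by (simp add: A.enc_def B.enc_def)
  then have nn: "n = n'" using A.n1 B.n1 by simp
  have pp: "0 < v \<Longrightarrow> v < n \<Longrightarrow> A.par v = B.par v" for v
    using ee[of v] nn assms(3,4) unfolding A.enc_def B.enc_def by (auto split: if_splits)
  have "JE a b = JE' a b" for a b
  proof (cases "a < n \<and> b < n")
    case True
    then show ?thesis using A.edge_char[of a b] B.edge_char[of a b] nn pp by auto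
  next
    case False
    then show ?thesis using A.bnd B.bnd nn by blast
  qed
  then show ?thesis using nn by blast
qed

definition trees :: "nat \<Rightarrow> (nat \<times> (nat \<Rightarrow> nat \<Rightarrow> bool)) set" where
  "trees \<tau> = {(n, JE). ordered_tree n JE \<and> n \<le> \<tau>}"

lemma trees_card: "finite (trees \<tau>) \<and> card (trees \<tau>) \<le> \<tau> ^ \<tau>"
proof -
  define f where "f = (\<lambda>(n, JE). restrict (otree.enc n JE) {0..<\<tau>})"
  have inj: "inj_on f (trees \<tau>)"
  proof (rule inj_onI)
    fix x y assume x: "x \<in> trees \<tau>" and y: "y \<in> trees \<tau>" and e: "f x = f y"
    obtain n JE where xx: "x = (n, JE)" by (cases x)
    obtain n' JE' where yy: "y = (n', JE')" by (cases y)
    have t1: "ordered_tree n JE" "n \<le> \<tau>" using x xx unfolding trees_def by auto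
    have t2: "ordered_tree n' JE'" "n' \<le> \<tau>" using y yy unfolding trees_def by auto
    have ee: "restrict (otree.enc n JE) {0..<\<tau>} = restrict (otree.enc n' JE') {0..<\<tau>}"
      using e xx yy unfolding f_def by simp
    have "n = n' \<and> JE = JE'" by (rule enc_inj[OF t1(1) t2(1) t1(2) t2(2) ee])
    then show "x = y" using xx yy by simp
  qed
  have sub: "f ` trees \<tau> \<subseteq> {0..<\<tau>} \<rightarrow>\<^sub>E {0..<\<tau>}"
  proof
    fix g assume "g \<in> f ` trees \<tau>"
    then obtain n JE where t: "ordered_tree n JE" "n \<le> \<tau>" and g: "g = restrict (otree.enc n JE) {0..<\<tau>}"
      unfolding trees_def f_def by auto
    have "\<And>v. v < \<tau> \<Longrightarrow> otree.enc n JE v < \<tau>"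
      using otree.enc_range[OF otree.intro[OF t(1)] t(2)] by blast
    then show "g \<in> {0..<\<tau>} \<rightarrow>\<^sub>E {0..<\<tau>}" using g by auto
  qed
  have fin: "finite ({0..<\<tau>} \<rightarrow>\<^sub>E {0..<\<tau>})" by (simp add: finite_PiE)
  have "finite (trees \<tau>)" using inj sub fin by (meson finite_imageD finite_subset)
  moreover have "card (trees \<tau>) \<le> card ({0..<\<tau>} \<rightarrow>\<^sub>E {0..<\<tau>})"
    using card_inj_on_le[OF inj sub fin] .
  ultimately show ?thesis by (simp add: card_funcsetE)
qed



lemma trace_mono:
  assumes "\<forall>i\<in>I. C i \<subseteq> B i"
  shows "trace E I C n JE \<subseteq> trace E I B n JE"
proof
  fix S assume "S \<in> trace E I C n JE"
  then obtain phi f where S: "S = phi ` {0..<n}" and r: "rainbow_copy E I C n JE phi f"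
    unfolding trace_def by blast
  have "rainbow_copy E I B n JE phi f" using r assms unfolding rainbow_copy_def by blast
  then show "S \<in> trace E I B n JE" unfolding trace_def using S by blast
qed

lemma trace_sub: assumes "S \<in> trace E I B n JE" shows "S \<subseteq> I"
proof -
  obtain phi f where S: "S = phi ` {0..<n}" and r: "rainbow_copy E I B n JE phi f"
    using assms unfolding trace_def by blast
  have "\<forall>a<n. phi a \<in> I" using r unfolding rainbow_copy_def by blast
  then show ?thesis using S by auto
qed

definition pairs where
  "pairs E \<tau> I B = {(t, S). t \<in> trees \<tau> \<and> S \<in> trace E I B (fst t) (snd t)}"

lemma pairs_sub: "pairs E \<tau> I B \<subseteq> trees \<tau> \<times> Pow I"
proof
  fix x assume "x \<in> pairs E \<tau> I B"
  then obtain t S where x: "x = (t, S)" "t \<in> trees \<tau>" "S \<in> trace E I B (fst t) (snd t)"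
    unfolding pairs_def by blast
  then have "S \<subseteq> I" using trace_sub by blast
  then show "x \<in> trees \<tau> \<times> Pow I" using x by simp
qed

lemma pairs_card:
  assumes "finite I"
  shows "finite (pairs E \<tau> I B) \<and> card (pairs E \<tau> I B) \<le> \<tau> ^ \<tau> * 2 ^ card I"
proof -
  have ft: "finite (trees \<tau>)" and ct: "card (trees \<tau>) \<le> \<tau> ^ \<tau>" using trees_card by auto
  have f: "finite (trees \<tau> \<times> Pow I)" using ft assms by simp
  have c1: "card (pairs E \<tau> I B) \<le> card (trees \<tau> \<times> Pow I)"
    by (rule card_mono[OF f pairs_sub])
  have c2: "card (trees \<tau> \<times> Pow I) = card (trees \<tau>) * 2 ^ card I"
    using assms by (simp add: card_cartesian_product card_Pow)
  have c3: "card (trees \<tau>) * 2 ^ card I \<le> \<tau> ^ \<tau> * 2 ^ card I"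
    using ct by (rule mult_right_mono) simp
  have "finite (pairs E \<tau> I B)" by (rule finite_subset[OF pairs_sub f])
  then show ?thesis using c1 c2 c3 by linarith
qed

lemma contraction_trans:
  "contraction V I B C \<Longrightarrow> contraction V I C D \<Longrightarrow> contraction V I B D"
  unfolding contraction_def by blast

lemma main:
  assumes fI: "finite I" and k0: "0 < \<kappa>" and k1: "\<kappa> \<le> 1"
  shows "blockade V I B \<Longrightarrow> card (pairs E \<tau> I B) \<le> m \<Longrightarrow>
    \<exists>B'. contraction V I B B' \<and> support_invariant V E \<kappa> \<tau> I B'
      \<and> real (width I B') \<ge> \<kappa> ^ m * real (width I B)"
proof (induction m arbitrary: B rule: less_induct)
  case (less m B)
  show ?case
  proof (cases "support_invariant V E \<kappa> \<tau> I B")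
    case True
    have "contraction V I B B" using less.prems unfolding contraction_def blockade_def by auto
    moreover have "\<kappa> ^ m * real (width I B) \<le> real (width I B)"
    proof -
      have "\<kappa> ^ m \<le> 1" using k0 k1 by (simp add: power_le_one)
      then show ?thesis using mult_right_mono[of "\<kappa> ^ m" 1 "real (width I B)"] by simp
    qed
    ultimately show ?thesis using True by blast
  next
    case False
    then obtain B2 n JE where c2: "contraction V I B B2" and w2: "real (width I B2) \<ge> \<kappa> * real (width I B)"
      and t: "ordered_tree n JE" "n \<le> \<tau>" and ne: "trace E I B n JE \<noteq> trace E I B2 n JE"
      unfolding support_invariant_def by blast
    have sub: "\<forall>i\<in>I. B2 i \<subseteq> B i" using c2 unfolding contraction_def by blast
    have "trace E I B2 n JE \<subseteq> trace E I B n JE" using trace_mono[OF sub] .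
    with ne obtain S where S: "S \<in> trace E I B n JE" "S \<notin> trace E I B2 n JE" by blast
    have psub: "pairs E \<tau> I B2 \<subseteq> pairs E \<tau> I B"
      unfolding pairs_def using trace_mono[OF sub] by auto
    have "((n, JE), S) \<in> pairs E \<tau> I B - pairs E \<tau> I B2"
      using S t unfolding pairs_def trees_def by auto
    then have "pairs E \<tau> I B2 \<subset> pairs E \<tau> I B" using psub by blast
    then have lt: "card (pairs E \<tau> I B2) < card (pairs E \<tau> I B)"
      using pairs_card[OF fI] psubset_card_mono by blast
    then obtain m' where m': "m = Suc m'" using less.prems by (cases m) auto
    have "blockade V I B2" using c2 unfolding contraction_def by blast
    moreover have "card (pairs E \<tau> I B2) \<le> m'" using lt less.prems m' by simp
    ultimately obtain B3 where c3: "contraction V I B2 B3" and si: "support_invariant V E \<kappa> \<tau> I B3"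
      and w3: "real (width I B3) \<ge> \<kappa> ^ m' * real (width I B2)"
      using less.IH[of m' B2] m' by blast
    have "\<kappa> ^ m * real (width I B) = \<kappa> ^ m' * (\<kappa> * real (width I B))" using m' by simp
    also have "\<dots> \<le> \<kappa> ^ m' * real (width I B2)" using w2 k0 by (simp add: mult_left_mono)
    also have "\<dots> \<le> real (width I B3)" using w3 .
    finally show ?thesis using contraction_trans[OF c2 c3] si by blast
  qed
qed



lemma si_D: "support_invariant V E \<kappa> \<tau> I B \<Longrightarrow> contraction V I B B' \<Longrightarrow>
   real (width I B') \<ge> \<kappa> * real (width I B) \<Longrightarrow> ordered_tree n JE \<Longrightarrow> n \<le> \<tau> \<Longrightarrow>
   trace E I B n JE = trace E I B' n JE"
  unfolding support_invariant_def by blast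

lemma equi:
  assumes fV: "finite V" and fI: "finite I" and Ine: "I \<noteq> {}" and bl: "blockade V I B"
    and si: "support_invariant V E \<kappa> \<tau> I B" and k1: "\<kappa> \<le> 1"
  shows "\<exists>C. contraction V I B C \<and> equicardinal I C \<and> support_invariant V E \<kappa> \<tau> I C
     \<and> width I C = width I B"
proof -
  define w where "w = width I B"
  have fin: "i \<in> I \<Longrightarrow> finite (B i)" for i using bl fV unfolding blockade_def by (meson finite_subset)
  have ge: "i \<in> I \<Longrightarrow> w \<le> card (B i)" for i unfolding w_def width_def using fI by simp
  have w1: "w \<ge> 1"
  proof -
    have "w \<in> (\<lambda>i. card (B i)) ` I" unfolding w_def width_def using fI Ine by simp
    then obtain i where "i \<in> I" "w = card (B i)" by auto
    then show ?thesis using fin bl unfolding blockade_def by (simp add: Suc_leI card_gt_0_iff)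
  qed
  define C where "C i = (SOME T. T \<subseteq> B i \<and> card T = w)" for i
  have C: "i \<in> I \<Longrightarrow> C i \<subseteq> B i \<and> card (C i) = w" for i
    unfolding C_def by (rule someI_ex) (meson ge obtain_subset_with_card_n)
  have Cne: "i \<in> I \<Longrightarrow> C i \<noteq> {}" for i using C w1 by fastforce
  have cC: "contraction V I B C"
    using bl C Cne unfolding contraction_def blockade_def by blast
  have eq: "equicardinal I C" unfolding equicardinal_def using C by simp
  have wC: "width I C = w"
  proof -
    have "(\<lambda>i. card (C i)) ` I = {w}" using C Ine by auto
    then show ?thesis unfolding width_def by simp
  qed
  have "support_invariant V E \<kappa> \<tau> I C"
    unfolding support_invariant_def
  proof (intro allI impI)
    fix D n JE
    assume D: "contraction V I C D \<and> \<kappa> * real (width I C) \<le> real (width I D)"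
      and t: "ordered_tree n JE \<and> n \<le> \<tau>"
    have cD: "contraction V I B D" using contraction_trans[OF cC] D by blast
    have wD: "real (width I D) \<ge> \<kappa> * real (width I B)" using D wC w_def by simp
    have 1: "trace E I B n JE = trace E I D n JE" using si_D[OF si cD wD] t by blast
    have "\<kappa> * real w \<le> real w" using mult_right_mono[OF k1, of "real w"] by simp
    then have wC': "real (width I C) \<ge> \<kappa> * real (width I B)" using wC w_def by simp
    have 2: "trace E I B n JE = trace E I C n JE" using si_D[OF si cC wC'] t by blast
    show "trace E I C n JE = trace E I D n JE" using 1 2 by simp
  qed
  then show ?thesis using cC eq wC w_def by blast
qed

theorem theorem4p1:
  fixes V :: "'v set" and E :: "'v \<Rightarrow> 'v \<Rightarrow> bool" and B :: "int \<Rightarrow> 'v set"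
    and \<kappa> :: real and \<tau> K :: nat
  assumes "graph V E"
    and "\<tau> \<ge> 1" and "0 < \<kappa>" and "\<kappa> \<le> 1"
    and "K \<ge> 1"
    and "blockade V {1..int K} B"
  shows "\<exists>B'. contraction V {1..int K} B B' \<and> equicardinal {1..int K} B'
           \<and> support_invariant V E \<kappa> \<tau> {1..int K} B'
           \<and> real (width {1..int K} B') \<ge> \<kappa> ^ (2 ^ K * \<tau> ^ \<tau>) * real (width {1..int K} B)"
proof -
  define I where "I = {1..int K}"
  have fI: "finite I" and Ine: "I \<noteq> {}" and cI: "card I = K" using assms(5) by (auto simp: I_def)
  have fV: "finite V" using assms(1) unfolding graph_def by simp
  have "card (pairs E \<tau> I B) \<le> \<tau> ^ \<tau> * 2 ^ K" using pairs_card[OF fI, of E \<tau> B] cI by simp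
  then have "card (pairs E \<tau> I B) \<le> 2 ^ K * \<tau> ^ \<tau>" by (metis mult.commute)
  from main[OF fI assms(3,4) assms(6)[folded I_def] this]
  obtain B1 where c1: "contraction V I B B1" and si: "support_invariant V E \<kappa> \<tau> I B1"
    and w1: "real (width I B1) \<ge> \<kappa> ^ (2 ^ K * \<tau> ^ \<tau>) * real (width I B)" by blast
  have "blockade V I B1" using c1 unfolding contraction_def by blast
  from equi[OF fV fI Ine this si assms(4)] obtain C where
    "contraction V I B1 C" "equicardinal I C" "support_invariant V E \<kappa> \<tau> I C" "width I C = width I B1"
    by blast
  then have "contraction V I B C \<and> equicardinal I C \<and> support_invariant V E \<kappa> \<tau> I C
     \<and> real (width I C) \<ge> \<kappa> ^ (2 ^ K * \<tau> ^ \<tau>) * real (width I B)"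
    using contraction_trans[OF c1] w1 by simp
  then show ?thesis unfolding I_def by blast
qed

end
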